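(* Let $\varphi:G\times X\to X$ be an action of a metrizable group $G$ on a non-meagre metric space $X$. If each point-evaluation map $\varphi_x:g\mapsto\varphi(g,x)$ is countably-covered and takes open sets to sets with the Baire property, then the action is a Nikodym action.
   Context: A group action satisfies $\varphi(e_G,x)=x$, $\varphi(gh,x)=\varphi(g,\varphi(h,x))$; write $Ux=\varphi_x(U)$. The map $\varphi_x$ is countably-covered if there exist self-homeomorphisms $h^x_n$ ($n\in\mathbb N$) of $X$ such that for every open neighbourhood $U$ (of $e_G$) in $G$ the sets $\{h^x_n(\varphi_x(U)):n\in\mathbb N\}$ cover $X$. The action is a Nikodym action if for every non-empty open neighbourhood $U$ of $e_G$ and every $x\in X$, $Ux$ contains a non-meagre set with the Baire property. *)

theory Defs
  imports "HOL-Analysis.Analysis"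
begin

definition nowhere_dense :: "'a::topological_space set \<Rightarrow> bool" where
  "nowhere_dense A \<longleftrightarrow> interior (closure A) = {}"

definition meagre :: "'a::topological_space set \<Rightarrow> bool" where
  "meagre A \<longleftrightarrow> (\<exists>F :: nat \<Rightarrow> 'a set. (\<forall>n. nowhere_dense (F n)) \<and> A \<subseteq> (\<Union>n. F n))"

definition baire_property :: "'a::topological_space set \<Rightarrow> bool" where
  "baire_property A \<longleftrightarrow> (\<exists>U. open U \<and> meagre ((A - U) \<union> (U - A)))"

text \<open>Group actions; the group is written additively (identity 0), not necessarily abelian.\<close>

definition group_action :: "('g::group_add \<Rightarrow> 'x \<Rightarrow> 'x) \<Rightarrow> bool" where
  "group_action \<phi> \<longleftrightarrow> (\<forall>x. \<phi> 0 x = x) \<and> (\<forall>g h x. \<phi> (g + h) x = \<phi> g (\<phi> h x))"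

definition countably_covered ::
    "('g::{group_add,topological_space} \<Rightarrow> 'x::topological_space \<Rightarrow> 'x) \<Rightarrow> 'x \<Rightarrow> bool" where
  "countably_covered \<phi> x \<longleftrightarrow>
     (\<exists>h :: nat \<Rightarrow> 'x \<Rightarrow> 'x. (\<forall>n. \<exists>k. homeomorphism UNIV UNIV (h n) k) \<and>
        (\<forall>U. open U \<and> 0 \<in> U \<longrightarrow> (\<Union>n. h n ` ((\<lambda>g. \<phi> g x) ` U)) = UNIV))"

definition nikodym_action ::
    "('g::{group_add,topological_space} \<Rightarrow> 'x::topological_space \<Rightarrow> 'x) \<Rightarrow> bool" where
  "nikodym_action \<phi> \<longleftrightarrow>
     (\<forall>U x. open U \<and> U \<noteq> {} \<and> 0 \<in> U \<longrightarrow>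
        (\<exists>A. A \<subseteq> (\<lambda>g. \<phi> g x) ` U \<and> \<not> meagre A \<and> baire_property A))"

end

theory Submission
  imports Defs
begin

lemma hom_img_vimage:
  assumes "homeomorphism UNIV UNIV h k"
  shows "h ` S = k -` S"
proof -
  have a: "\<And>x. k (h x) = x" and b: "\<And>y. h (k y) = y"
    using assms unfolding homeomorphism_def by auto
  show ?thesis
  proof (intro set_eqI iffI)
    fix y assume "y \<in> h ` S" then obtain x where "x \<in> S" "y = h x" by blast
    thus "y \<in> k -` S" using a by simp
  next
    fix y assume "y \<in> k -` S"
    hence "h (k y) \<in> h ` S" by blast
    thus "y \<in> h ` S" using b by simp
  qed
qed

lemma hom_sym: "homeomorphism UNIV UNIV h k \<Longrightarrow> homeomorphism UNIV UNIV k h"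
  by (rule homeomorphism_symD)

lemma nowhere_dense_hom:
  fixes A :: "'a::topological_space set"
  fixes h k :: "'a \<Rightarrow> 'a"
  assumes hk: "homeomorphism UNIV UNIV h k" and nd: "nowhere_dense A"
  shows "nowhere_dense (h ` A)"
proof -
  have ck: "continuous_on UNIV k" and ch: "continuous_on UNIV h"
    using hk unfolding homeomorphism_def by auto
  have kk: "k ` S = h -` S" for S
    using hom_img_vimage[OF hom_sym[OF hk]] .
  have cl: "closed (h ` closure A)"
    unfolding hom_img_vimage[OF hk] using ck closed_vimage continuous_on_closed_vimage by blast
  have "closure (h ` A) \<subseteq> h ` closure A"
    by (rule closure_minimal) (use closure_subset cl in auto)
  hence sub: "interior (closure (h ` A)) \<subseteq> interior (h ` closure A)"
    by (rule interior_mono)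
  let ?W = "interior (h ` closure A)"
  have "open (k ` ?W)" unfolding kk using ch open_vimage by blast
  moreover have "k ` ?W \<subseteq> closure A"
  proof
    fix y assume "y \<in> k ` ?W"
    then obtain z where "z \<in> ?W" "y = k z" by blast
    hence "z \<in> h ` closure A" using interior_subset by blast
    then obtain w where "w \<in> closure A" "z = h w" by blast
    moreover have "k (h w) = w" using hk unfolding homeomorphism_def by auto
    ultimately show "y \<in> closure A" using \<open>y = k z\<close> by simp
  qed
  ultimately have "k ` ?W \<subseteq> interior (closure A)" by (simp add: interior_maximal)
  hence "?W = {}" using nd unfolding nowhere_dense_def by auto
  thus ?thesis using sub unfolding nowhere_dense_def by auto
qed

lemma meagre_hom:
  fixes A :: "'a::topological_space set" and h k :: "'a \<Rightarrow> 'a"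
  assumes hk: "homeomorphism UNIV UNIV h k" and m: "meagre A"
  shows "meagre (h ` A)"
proof -
  have "\<exists>F :: nat \<Rightarrow> 'a set. (\<forall>n. nowhere_dense (F n)) \<and> A \<subseteq> (\<Union>n. F n)"
    using m unfolding meagre_def .
  then obtain F :: "nat \<Rightarrow> 'a set" where F1: "\<forall>n. nowhere_dense (F n)" and F2: "A \<subseteq> (\<Union>n. F n)"
    by (elim exE conjE)
  have 1: "\<forall>n. nowhere_dense (h ` F n)"
  proof
    fix n show "nowhere_dense (h ` F n)" using F1 by (intro nowhere_dense_hom[OF hk]) (elim allE)
  qed
  have 2: "h ` A \<subseteq> (\<Union>n. h ` F n)"
  proof
    fix y assume "y \<in> h ` A"
    then obtain a where a: "a \<in> A" "y = h a" by (elim imageE)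
    then obtain n where "a \<in> F n" using F2 by (auto simp del: )
    thus "y \<in> (\<Union>n. h ` F n)" using a by (intro UN_I[of n]) auto
  qed
  show ?thesis unfolding meagre_def by (rule exI[of _ "\<lambda>n. h ` F n"], rule conjI[OF 1 2])
qed

lemma meagre_countable_union:
  fixes A :: "nat \<Rightarrow> 'a::topological_space set"
  assumes "\<forall>n. meagre (A n)"
  shows "meagre (\<Union>n. A n)"
proof -
  have ex: "\<forall>n. \<exists>Fn :: nat \<Rightarrow> 'a set. (\<forall>m. nowhere_dense (Fn m)) \<and> A n \<subseteq> (\<Union>m. Fn m)"
    using assms unfolding meagre_def .
  have "\<exists>F :: nat \<Rightarrow> nat \<Rightarrow> 'a set. \<forall>n. (\<forall>m. nowhere_dense (F n m)) \<and> A n \<subseteq> (\<Union>m. F n m)"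
    using choice[OF ex] .
  then obtain F :: "nat \<Rightarrow> nat \<Rightarrow> 'a set"
    where F: "\<forall>n. (\<forall>m. nowhere_dense (F n m)) \<and> A n \<subseteq> (\<Union>m. F n m)"
    by (elim exE)
  define G where "G i = (case prod_decode i of (n, m) \<Rightarrow> F n m)" for i
  have 1: "\<forall>i. nowhere_dense (G i)"
  proof
    fix i
    obtain n m where nm: "prod_decode i = (n, m)" by (cases "prod_decode i")
    have "nowhere_dense (F n m)" using F by blast
    thus "nowhere_dense (G i)" unfolding G_def nm by simp
  qed
  have 2: "(\<Union>n. A n) \<subseteq> (\<Union>i. G i)"
  proof
    fix x assume "x \<in> (\<Union>n. A n)"
    then obtain n where "x \<in> A n" by (elim UN_E)
    hence "x \<in> (\<Union>m. F n m)" using F by blast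
    then obtain m where "x \<in> F n m" by (elim UN_E)
    hence "x \<in> G (prod_encode (n, m))" unfolding G_def by simp
    thus "x \<in> (\<Union>i. G i)" by (rule UN_I[OF UNIV_I])
  qed
  show ?thesis unfolding meagre_def by (rule exI[of _ G], rule conjI[OF 1 2])
qed

theorem proposition1:
  fixes \<phi> :: "'g::{topological_group_add, metric_space} \<Rightarrow> 'x::metric_space \<Rightarrow> 'x"
  assumes "group_action \<phi>"
    and "\<not> meagre (UNIV :: 'x set)"
    and "\<forall>x. countably_covered \<phi> x"
    and "\<forall>x U. open U \<longrightarrow> baire_property ((\<lambda>g. \<phi> g x) ` U)"
  shows "nikodym_action \<phi>"
  unfolding nikodym_action_def
proof (intro allI impI)
  fix U :: "'g set" and x :: 'x
  assume U: "open U \<and> U \<noteq> {} \<and> 0 \<in> U"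
  obtain h :: "nat \<Rightarrow> 'x \<Rightarrow> 'x" where h: "\<forall>n. \<exists>k. homeomorphism UNIV UNIV (h n) k"
    "\<forall>U. open U \<and> 0 \<in> U \<longrightarrow> (\<Union>n. h n ` ((\<lambda>g. \<phi> g x) ` U)) = UNIV"
  proof -
    have "countably_covered \<phi> x" using assms(3) by (rule spec)
    thus ?thesis unfolding countably_covered_def using that by blast
  qed
  have "\<not> meagre ((\<lambda>g. \<phi> g x) ` U)"
  proof
    assume m: "meagre ((\<lambda>g. \<phi> g x) ` U)"
    have "\<forall>n. meagre (h n ` ((\<lambda>g. \<phi> g x) ` U))"
    proof
      fix n
      have "\<exists>k. homeomorphism UNIV UNIV (h n) k" using h(1) by (rule spec)
      then obtain k where "homeomorphism UNIV UNIV (h n) k" by (elim exE)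
      thus "meagre (h n ` ((\<lambda>g. \<phi> g x) ` U))" by (rule meagre_hom[OF _ m])
    qed
    hence "meagre (\<Union>n. h n ` ((\<lambda>g. \<phi> g x) ` U))" by (rule meagre_countable_union)
    moreover have "(\<Union>n. h n ` ((\<lambda>g. \<phi> g x) ` U)) = UNIV" using h(2) U by simp
    ultimately show False using assms(2) by simp
  qed
  moreover have "baire_property ((\<lambda>g. \<phi> g x) ` U)" using assms(4) U by simp
  ultimately show "\<exists>A. A \<subseteq> (\<lambda>g. \<phi> g x) ` U \<and> \<not> meagre A \<and> baire_property A"
    by blast
qed

end
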